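(* Let $X$ be a $T_0$-space. If $X$ is $S^{\ast}$-well-filtered, then $X$ is weak well-filtered. If moreover $X$ is coherent, then $X$ is $S^{\ast}$-well-filtered if and only if $X$ is weak well-filtered. In particular, every weak well-filtered KC space is $S^{\ast}$-well-filtered.
   Context: All spaces are $T_0$. The specialization order of $X$ is given by $x\le y$ iff $x\in cl(\{y\})$; ${\uparrow}$ is taken with respect to it; a subset is saturated if it is an upper set in the specialization order. $K(X)$ denotes the set of all nonempty compact saturated subsets of $X$; a family in $K(X)$ is filtered if any two members contain a common member. $X$ is weak well-filtered if for every filtered family $\{K_i\mid i\in I\}\subseteq K(X)$ and every nonempty open $U$, $\bigcap_{i\in I}K_i\subseteq U$ implies $K_i\subseteq U$ for some $i$. $X$ is $S^{\ast}$-well-filtered if for every filtered family $\{K_i\mid i\in I\}\subseteq K(X)$, every $G\in K(X)$ and every nonempty open $U$, $\bigcap_{i\in I}K_i\cap G\subseteq U$ implies $K_i\cap G\subseteq U$ for some $i$. $X$ is coherent if the intersection of any two compact saturated subsets is compact. $X$ is KC if every compact subset of $X$ is closed. *)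

theory Defs
  imports "HOL-Analysis.Analysis"
begin

definition spec_le :: "'a topology \<Rightarrow> 'a \<Rightarrow> 'a \<Rightarrow> bool" where
  "spec_le X x y \<longleftrightarrow> x \<in> X closure_of {y}"

definition upset :: "'a topology \<Rightarrow> 'a set \<Rightarrow> 'a set" where
  "upset X A = {y \<in> topspace X. \<exists>x\<in>A. spec_le X x y}"

definition saturatedin :: "'a topology \<Rightarrow> 'a set \<Rightarrow> bool" where
  "saturatedin X A \<longleftrightarrow> A \<subseteq> topspace X \<and> upset X A = A"

definition KX :: "'a topology \<Rightarrow> 'a set set" where
  "KX X = {K. K \<noteq> {} \<and> compactin X K \<and> saturatedin X K}"

definition filtered_family :: "'a set set \<Rightarrow> bool" where
  "filtered_family \<K> \<longleftrightarrow> \<K> \<noteq> {} \<and> (\<forall>K1\<in>\<K>. \<forall>K2\<in>\<K>. \<exists>K3\<in>\<K>. K3 \<subseteq> K1 \<and> K3 \<subseteq> K2)"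

definition weak_well_filtered :: "'a topology \<Rightarrow> bool" where
  "weak_well_filtered X \<longleftrightarrow>
     (\<forall>\<K> U. \<K> \<subseteq> KX X \<and> filtered_family \<K> \<and> openin X U \<and> U \<noteq> {} \<and> \<Inter>\<K> \<subseteq> U
        \<longrightarrow> (\<exists>K\<in>\<K>. K \<subseteq> U))"

definition S_star_well_filtered :: "'a topology \<Rightarrow> bool" where
  "S_star_well_filtered X \<longleftrightarrow>
     (\<forall>\<K> G U. \<K> \<subseteq> KX X \<and> filtered_family \<K> \<and> G \<in> KX X \<and> openin X U \<and> U \<noteq> {}
        \<and> \<Inter>\<K> \<inter> G \<subseteq> U \<longrightarrow> (\<exists>K\<in>\<K>. K \<inter> G \<subseteq> U))"

definition coherent_space :: "'a topology \<Rightarrow> bool" where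
  "coherent_space X \<longleftrightarrow>
     (\<forall>A B. compactin X A \<and> saturatedin X A \<and> compactin X B \<and> saturatedin X B
        \<longrightarrow> compactin X (A \<inter> B))"

definition KC_space :: "'a topology \<Rightarrow> bool" where
  "KC_space X \<longleftrightarrow> (\<forall>K. compactin X K \<longrightarrow> closedin X K)"

end

theory Submission
  imports Defs
begin

lemma sat_Int:
  assumes "saturatedin X A" "saturatedin X B"
  shows "saturatedin X (A \<inter> B)"
proof -
  have s: "A \<inter> B \<subseteq> topspace X" using assms unfolding saturatedin_def by blast
  have "upset X (A \<inter> B) \<subseteq> upset X A" "upset X (A \<inter> B) \<subseteq> upset X B"
    unfolding upset_def by blast+
  moreover have "A \<inter> B \<subseteq> upset X (A \<inter> B)"
  proof
    fix x assume "x \<in> A \<inter> B"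
    then have "x \<in> topspace X" using s by blast
    then have "spec_le X x x" unfolding spec_le_def
      using closure_of_subset[of "{x}" X] by blast
    then show "x \<in> upset X (A \<inter> B)" unfolding upset_def using \<open>x \<in> A \<inter> B\<close> \<open>x \<in> topspace X\<close> by blast
  qed
  ultimately show ?thesis using assms s unfolding saturatedin_def by blast
qed

lemma wwfD:
  assumes "weak_well_filtered X" "\<K> \<subseteq> KX X" "filtered_family \<K>" "openin X U" "U \<noteq> {}" "\<Inter>\<K> \<subseteq> U"
  shows "\<exists>K\<in>\<K>. K \<subseteq> U"
  using assms unfolding weak_well_filtered_def by simp

lemma sstarD:
  assumes "S_star_well_filtered X" "\<K> \<subseteq> KX X" "filtered_family \<K>" "G \<in> KX X" "openin X U" "U \<noteq> {}" "\<Inter>\<K> \<inter> G \<subseteq> U"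
  shows "\<exists>K\<in>\<K>. K \<inter> G \<subseteq> U"
  using assms unfolding S_star_well_filtered_def by simp

lemma part1:
  assumes "S_star_well_filtered X" shows "weak_well_filtered X"
  unfolding weak_well_filtered_def
proof (intro allI impI)
  fix \<K> U assume h: "\<K> \<subseteq> KX X \<and> filtered_family \<K> \<and> openin X U \<and> U \<noteq> {} \<and> \<Inter>\<K> \<subseteq> U"
  then obtain K0 where K0: "K0 \<in> \<K>" unfolding filtered_family_def by blast
  have "\<Inter>\<K> \<inter> K0 \<subseteq> U" using h by blast
  then obtain K where K: "K \<in> \<K>" "K \<inter> K0 \<subseteq> U"
  proof -
    have "K0 \<in> KX X" using h K0 by blast
    then show ?thesis using assms h \<open>\<Inter>\<K> \<inter> K0 \<subseteq> U\<close> that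
      using sstarD[OF assms, of \<K> K0 U] by blast
  qed
  then obtain K3 where "K3 \<in> \<K>" "K3 \<subseteq> K" "K3 \<subseteq> K0"
    using h K0 unfolding filtered_family_def by blast
  then show "\<exists>K\<in>\<K>. K \<subseteq> U" using K by blast
qed

lemma part2:
  assumes "\<And>A B. A \<in> KX X \<Longrightarrow> B \<in> KX X \<Longrightarrow> compactin X (A \<inter> B)"
    and "weak_well_filtered X"
  shows "S_star_well_filtered X"
  unfolding S_star_well_filtered_def
proof (intro allI impI)
  fix \<K> G U assume h: "\<K> \<subseteq> KX X \<and> filtered_family \<K> \<and> G \<in> KX X \<and> openin X U \<and> U \<noteq> {}
        \<and> \<Inter>\<K> \<inter> G \<subseteq> U"
  show "\<exists>K\<in>\<K>. K \<inter> G \<subseteq> U"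
  proof (cases "\<exists>K\<in>\<K>. K \<inter> G = {}")
    case True then show ?thesis by blast
  next
    case False
    define \<L> where "\<L> = (\<lambda>K. K \<inter> G) ` \<K>"
    have "\<L> \<subseteq> KX X"
    proof
      fix L assume "L \<in> \<L>"
      then obtain K where K: "K \<in> \<K>" "L = K \<inter> G" unfolding \<L>_def by blast
      then have KK: "K \<in> KX X" using h by blast
      have GG: "G \<in> KX X" using h by simp
      have ne: "L \<noteq> {}" using K False by simp
      have cp: "compactin X L" using assms(1)[OF KK GG] K(2) by simp
      have sL: "saturatedin X L" using sat_Int[of X K G] KK GG K(2) unfolding KX_def by simp
      show "L \<in> KX X" using ne cp sL unfolding KX_def by simp
    qed
    moreover have "filtered_family \<L>"
    proof -
      have f: "filtered_family \<K>" using h by simp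
      show ?thesis unfolding filtered_family_def
      proof (intro conjI ballI)
        show "\<L> \<noteq> {}" using f unfolding filtered_family_def \<L>_def by simp
      next
        fix L1 L2 assume "L1 \<in> \<L>" "L2 \<in> \<L>"
        then obtain K1 K2 where "K1 \<in> \<K>" "K2 \<in> \<K>" "L1 = K1 \<inter> G" "L2 = K2 \<inter> G"
          unfolding \<L>_def by blast
        moreover from this obtain K3 where "K3 \<in> \<K>" "K3 \<subseteq> K1" "K3 \<subseteq> K2"
          using f unfolding filtered_family_def by meson
        ultimately show "\<exists>L3\<in>\<L>. L3 \<subseteq> L1 \<and> L3 \<subseteq> L2"
          unfolding \<L>_def by (intro bexI[of _ "K3 \<inter> G"]) auto
      qed
    qed
    moreover have "\<Inter>\<L> \<subseteq> U"
    proof -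
      have "\<K> \<noteq> {}" using h unfolding filtered_family_def by blast
      then have "\<Inter>\<L> = \<Inter>\<K> \<inter> G" unfolding \<L>_def by auto
      then show ?thesis using h by simp
    qed
    ultimately obtain L where "L \<in> \<L>" "L \<subseteq> U"
      using wwfD[OF assms(2), of \<L> U] h by blast
    then show ?thesis unfolding \<L>_def by blast
  qed
qed

theorem mainTheorem7:
  fixes X :: "'a topology"
  assumes "t0_space X"
  shows "(S_star_well_filtered X \<longrightarrow> weak_well_filtered X)
    \<and> (coherent_space X \<longrightarrow> (S_star_well_filtered X \<longleftrightarrow> weak_well_filtered X))
    \<and> (weak_well_filtered X \<and> KC_space X \<longrightarrow> S_star_well_filtered X)"
proof (intro conjI impI)
  show "S_star_well_filtered X \<Longrightarrow> weak_well_filtered X" by (rule part1)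
  show "S_star_well_filtered X \<longleftrightarrow> weak_well_filtered X" if c: "coherent_space X"
  proof
    show "S_star_well_filtered X \<Longrightarrow> weak_well_filtered X" by (rule part1)
    show "weak_well_filtered X \<Longrightarrow> S_star_well_filtered X"
      by (rule part2) (use c in \<open>auto simp: coherent_space_def KX_def\<close>)
  qed
  show "S_star_well_filtered X" if w: "weak_well_filtered X \<and> KC_space X"
    by (rule part2) (use w closed_Int_compactin in \<open>auto simp: KC_space_def KX_def\<close>)
qed

end
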